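(* Let $A\subset\mathbb{R}$ be a Lebesgue measurable set and $a\in\mathbb{R}$. Then the following are equivalent: (i) every function $f:A\to\mathbb{R}$ which has a $T_6$ limit at $a$ has exactly one $T_6$ limit at $a$ (i.e. if $T_6\lim_{x\to a}f(x)=L_1$ and $T_6\lim_{x\to a}f(x)=L_2$ then $L_1=L_2$); (ii) $\left|\left((a-\delta,a+\delta)\setminus\{a\}\right)\cap A\right|>0$ for every real $\delta>0$.
   Context: $|K|$ denotes the Lebesgue measure of $K\subset\mathbb{R}$ (a set of measure zero means a Lebesgue null set, i.e. Lebesgue outer measure zero). For $A\subset\mathbb{R}$, $f:A\to\mathbb{R}$ and $a,L\in\mathbb{R}$, one writes $T_6\lim_{x\to a}f(x)=L$ if for every real $\varepsilon>0$ there exists a real $\delta_\varepsilon>0$ such that $\left|\left\{x\in\left((a-\delta_{\varepsilon},a+\delta_{\varepsilon})\setminus\{a\}\right)\cap A:\ |f(x)-L|\geq\varepsilon\right\}\right|=0$. *)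

theory Defs
  imports "HOL-Analysis.Analysis"
begin

text \<open>T6 limit: for every eps > 0 there is delta > 0 such that the set of points of the
punctured delta-neighbourhood of a lying in A where |f x - L| >= eps is a Lebesgue null set
(Lebesgue outer measure zero; lebesgue is complete so this is membership in null_sets lebesgue).
Only the values of f on A matter.\<close>
definition T6_lim :: "real set \<Rightarrow> (real \<Rightarrow> real) \<Rightarrow> real \<Rightarrow> real \<Rightarrow> bool" where
  "T6_lim A f a L \<longleftrightarrow>
     (\<forall>\<epsilon>>0. \<exists>\<delta>>0.
        {x \<in> ({a - \<delta> <..< a + \<delta>} - {a}) \<inter> A. \<bar>f x - L\<bar> \<ge> \<epsilon>} \<in> null_sets lebesgue)"

end

theory Submission
  imports Defs
begin

theorem theorem5:
  fixes A :: "real set" and a :: real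
  assumes "A \<in> sets lebesgue"
  shows "(\<forall>f L1 L2. T6_lim A f a L1 \<and> T6_lim A f a L2 \<longrightarrow> L1 = L2) \<longleftrightarrow>
         (\<forall>\<delta>>0. emeasure lebesgue (({a - \<delta> <..< a + \<delta>} - {a}) \<inter> A) > 0)"
proof
  assume H: "\<forall>f L1 L2. T6_lim A f a L1 \<and> T6_lim A f a L2 \<longrightarrow> L1 = L2"
  show "\<forall>\<delta>>0. emeasure lebesgue (({a - \<delta> <..< a + \<delta>} - {a}) \<inter> A) > 0"
  proof (rule ccontr)
    assume "\<not> ?thesis"
    then obtain d where d: "d > 0" and z: "emeasure lebesgue (({a - d <..< a + d} - {a}) \<inter> A) = 0"
      by (auto simp: not_less)
    have meas: "({a - d <..< a + d} - {a}) \<inter> A \<in> sets lebesgue" using assms by auto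
    have N: "({a - d <..< a + d} - {a}) \<inter> A \<in> null_sets lebesgue"
      using z meas by (rule null_setsI)
    have T: "T6_lim A f a L" for f L
      unfolding T6_lim_def
    proof (intro allI impI)
      fix e :: real assume "e > 0"
      show "\<exists>\<delta>>0. {x \<in> ({a - \<delta> <..< a + \<delta>} - {a}) \<inter> A. \<bar>f x - L\<bar> \<ge> e} \<in> null_sets lebesgue"
      proof (rule exI[of _ d], intro conjI)
        show "d > 0" by (rule d)
        show "{x \<in> ({a - d <..< a + d} - {a}) \<inter> A. \<bar>f x - L\<bar> \<ge> e} \<in> null_sets lebesgue"
          by (rule null_sets_completion_subset[OF _ N]) blast
      qed
    qed
    have "(0::real) = 1" using H T[of "\<lambda>x. 0" 0] T[of "\<lambda>x. 0" 1] by (metis (no_types))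
    then show False by simp
  qed
next
  assume P: "\<forall>\<delta>>0. emeasure lebesgue (({a - \<delta> <..< a + \<delta>} - {a}) \<inter> A) > 0"
  show "\<forall>f L1 L2. T6_lim A f a L1 \<and> T6_lim A f a L2 \<longrightarrow> L1 = L2"
  proof (intro allI impI)
    fix f L1 L2 assume h: "T6_lim A f a L1 \<and> T6_lim A f a L2"
    show "L1 = L2"
    proof (rule ccontr)
      assume ne: "L1 \<noteq> L2"
      define e where "e = \<bar>L1 - L2\<bar> / 2"
      have e: "e > 0" using ne by (simp add: e_def)
      obtain d1 where d1: "d1 > 0" and N1: "{x \<in> ({a - d1 <..< a + d1} - {a}) \<inter> A. \<bar>f x - L1\<bar> \<ge> e} \<in> null_sets lebesgue"
        using h e unfolding T6_lim_def by blast
      obtain d2 where d2: "d2 > 0" and N2: "{x \<in> ({a - d2 <..< a + d2} - {a}) \<inter> A. \<bar>f x - L2\<bar> \<ge> e} \<in> null_sets lebesgue"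
        using h e unfolding T6_lim_def by blast
      define d where "d = min d1 d2"
      have d: "d > 0" using d1 d2 by (simp add: d_def)
      have sub: "({a - d <..< a + d} - {a}) \<inter> A \<subseteq>
          {x \<in> ({a - d1 <..< a + d1} - {a}) \<inter> A. \<bar>f x - L1\<bar> \<ge> e} \<union>
          {x \<in> ({a - d2 <..< a + d2} - {a}) \<inter> A. \<bar>f x - L2\<bar> \<ge> e}"
      proof
        fix x assume x: "x \<in> ({a - d <..< a + d} - {a}) \<inter> A"
        have "\<bar>f x - L1\<bar> \<ge> e \<or> \<bar>f x - L2\<bar> \<ge> e" unfolding e_def by (auto simp: abs_if split: if_splits)
        then show "x \<in> {x \<in> ({a - d1 <..< a + d1} - {a}) \<inter> A. \<bar>f x - L1\<bar> \<ge> e} \<union>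
          {x \<in> ({a - d2 <..< a + d2} - {a}) \<inter> A. \<bar>f x - L2\<bar> \<ge> e}"
          using x by (auto simp: d_def)
      qed
      have "({a - d <..< a + d} - {a}) \<inter> A \<in> null_sets lebesgue"
        by (rule null_sets_completion_subset[OF sub null_sets.Un[OF N1 N2]])
      then have "emeasure lebesgue (({a - d <..< a + d} - {a}) \<inter> A) = 0" by (simp only: null_setsD1)
      moreover have "emeasure lebesgue (({a - d <..< a + d} - {a}) \<inter> A) > 0" using P d by blast
      ultimately show False by simp
    qed
  qed
qed

end
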